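(* Let $p$ be an odd prime and $q\in\mathbb C_p$ with $|1-q|_p<p^{-1/(p-1)}$. For $h\in\mathbb Z$, $n\in\mathbb Z_+$ and $r\in\mathbb N$, $$\int_{\mathbb Z_p}E_{n,q}^{(h,-r)}(x)\,d\mu_{-1}(x)=\frac{1}{2^r}\sum_{m=0}^r\frac{1}{[m]_q!}\sum_{k=0}^mq^{(h-r)m}S_1(m-1,k;q)(-1)^k[r]_q^{m-k}E_{n,q}(m)$$ $$=\frac{1}{2^r}\sum_{m=0}^r\frac{1}{[m]_q!}\sum_{k=0}^mq^{(h-r)m}S_1(m-1,k;q)(-1)^k[r]_q^{m-k}\cdot\frac{1}{(1-q)^n}\sum_{j=0}^n\sum_{l=0}^j\binom nj\binom jl(-1)^{j+l}(1-q)^lq^{mj}E_{l,q}.$$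
   Context: For $x\in\mathbb Z_p$, $[x]_q=\frac{1-q^x}{1-q}$; $[m]_q!=[m]_q\cdots[1]_q$, $[0]_q!=1$. The fermionic $p$-adic integral is $\int_{\mathbb Z_p}f(x)\,d\mu_{-1}(x)=\lim_{N\to\infty}\sum_{x=0}^{p^N-1}f(x)(-1)^x$. $E_{n,q}=\int_{\mathbb Z_p}[y]_q^n\,d\mu_{-1}(y)$ and $E_{n,q}(x)=\int_{\mathbb Z_p}[x+y]_q^n\,d\mu_{-1}(y)$ are the $q$-Euler numbers and polynomials. The extended higher-order Nörlund type $q$-Euler polynomials are $E_{n,q}^{(h,-r)}(x)=\frac{1}{(1-q)^n}\sum_{l=0}^n\binom nl(-1)^l\frac{q^{lx}}{\int_{\mathbb Z_p}\cdots\int_{\mathbb Z_p}q^{l(x_1+\cdots+x_r)}q^{\sum_{j=1}^r(h-j)x_j}\,d\mu_{-1}(x_1)\cdots d\mu_{-1}(x_r)}$. The $q$-Stirling numbers of the first kind are defined by $\prod_{k=1}^N(1+[k]_qz)=\sum_{k\ge0}S_1(N,k;q)z^k$ for $N\ge-1$ (empty product $=1$; $S_1(N,k;q)=0$ for $k>N$; $S_1(-1,0;q)=1$). *)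

theory Defs
  imports "HOL-Computational_Algebra.Computational_Algebra"
begin

text \<open>An abstract model of the field C_p: a field 'a with an absolute value av
  that is non-archimedean, complete, algebraically closed and restricts to
  the p-adic absolute value on the integers.\<close>

definition av_tends :: "('a::field \<Rightarrow> real) \<Rightarrow> (nat \<Rightarrow> 'a) \<Rightarrow> 'a \<Rightarrow> bool" where
  "av_tends av s L \<longleftrightarrow> (\<lambda>n. av (s n - L)) \<longlonglongrightarrow> 0"

definition Cp_field :: "nat \<Rightarrow> ('a::field \<Rightarrow> real) \<Rightarrow> bool" where
  "Cp_field p av \<longleftrightarrow>
     (\<forall>x. av x \<ge> 0) \<and> (\<forall>x. av x = 0 \<longleftrightarrow> x = 0) \<and>
     (\<forall>x y. av (x * y) = av x * av y) \<and>
     (\<forall>x y. av (x + y) \<le> max (av x) (av y)) \<and>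
     (\<forall>n::int. n \<noteq> 0 \<longrightarrow> av (of_int n) = real p powr (- real (multiplicity (int p) n))) \<and>
     (\<forall>s::nat \<Rightarrow> 'a. (\<forall>e>0. \<exists>N. \<forall>m\<ge>N. \<forall>n\<ge>N. av (s m - s n) < e)
          \<longrightarrow> (\<exists>L. av_tends av s L)) \<and>
     (\<forall>P::'a poly. degree P > 0 \<longrightarrow> (\<exists>x. poly P x = 0))"

text \<open>Fermionic p-adic integral: limit of sum over x = 0..p^N-1 of f(x)(-1)^x.
  Only the values of f at non-negative integers enter.\<close>
definition fint :: "nat \<Rightarrow> ('a::field \<Rightarrow> real) \<Rightarrow> (nat \<Rightarrow> 'a) \<Rightarrow> 'a" where
  "fint p av f = (THE L. av_tends av (\<lambda>N. \<Sum>x<p ^ N. f x * (-1) ^ x) L)"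

text \<open>r-fold iterated fermionic integral over variables x_1..x_r (entries 1..r of xs).\<close>
fun mfint :: "nat \<Rightarrow> ('a::field \<Rightarrow> real) \<Rightarrow> nat \<Rightarrow> ((nat \<Rightarrow> nat) \<Rightarrow> 'a) \<Rightarrow> 'a" where
  "mfint p av 0 F = F (\<lambda>_. 0)"
| "mfint p av (Suc k) F = fint p av (\<lambda>y. mfint p av k (\<lambda>xs. F (xs(Suc k := y))))"

definition qint :: "'a::field \<Rightarrow> nat \<Rightarrow> 'a" where
  "qint q x = (1 - q ^ x) / (1 - q)"

definition qfact :: "'a::field \<Rightarrow> nat \<Rightarrow> 'a" where
  "qfact q m = (\<Prod>k=1..m. qint q k)"

text \<open>q-Stirling numbers of the first kind, N \<ge> -1 (N = -1 gives the empty product).\<close>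
definition qS1 :: "'a::field \<Rightarrow> int \<Rightarrow> nat \<Rightarrow> 'a" where
  "qS1 q N k = coeff (\<Prod>i\<in>{1..nat N}. [:1, qint q i:]) k"

definition qEuler :: "nat \<Rightarrow> ('a::field \<Rightarrow> real) \<Rightarrow> 'a \<Rightarrow> nat \<Rightarrow> 'a" where
  "qEuler p av q n = fint p av (\<lambda>y. qint q y ^ n)"

definition qEuler_poly :: "nat \<Rightarrow> ('a::field \<Rightarrow> real) \<Rightarrow> 'a \<Rightarrow> nat \<Rightarrow> nat \<Rightarrow> 'a" where
  "qEuler_poly p av q n x = fint p av (\<lambda>y. qint q (x + y) ^ n)"

text \<open>Extended higher-order Noerlund type q-Euler polynomials E_{n,q}^{(h,-r)}(x),
  evaluated at non-negative integers x.\<close>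
definition qEuler_NH :: "nat \<Rightarrow> ('a::field \<Rightarrow> real) \<Rightarrow> 'a \<Rightarrow> nat \<Rightarrow> int \<Rightarrow> nat \<Rightarrow> nat \<Rightarrow> 'a" where
  "qEuler_NH p av q n h r x =
     1 / (1 - q) ^ n * (\<Sum>l=0..n. of_nat (n choose l) * (-1) ^ l * q ^ (l * x) /
        mfint p av r (\<lambda>xs. q ^ (l * (\<Sum>j=1..r. xs j)) *
                           q powi (\<Sum>j=1..r. (h - int j) * int (xs j))))"

end

theory Submission
  imports Defs
begin


context
  fixes p :: nat and av :: "'a::field \<Rightarrow> real"
  assumes pp: "prime p" and po: "odd p" and cp: "Cp_field p av"
begin

lemma av_nonneg: "av x \<ge> 0" using cp unfolding Cp_field_def by blast
lemma av_zero_iff: "av x = 0 \<longleftrightarrow> x = 0" using cp unfolding Cp_field_def by blast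
lemma av_mult: "av (x*y) = av x * av y" using cp unfolding Cp_field_def by blast
lemma av_ultra: "av (x+y) \<le> max (av x) (av y)" using cp unfolding Cp_field_def by blast
lemma av_int: "n \<noteq> 0 \<Longrightarrow> av (of_int n) = real p powr (- real (multiplicity (int p) n))"
  using cp unfolding Cp_field_def by blast

lemma p_gt1: "p > 1" using pp prime_gt_1_nat by blast

lemma av_one: "av 1 = 1"
proof -
  have "av (of_int 1) = real p powr (- real (multiplicity (int p) 1))" by (rule av_int) simp
  thus ?thesis using p_gt1 by simp
qed

lemma av_minus_one: "av (-1) = 1"
proof -
  have "av (of_int (-1)) = real p powr (- real (multiplicity (int p) (-1)))" by (rule av_int) simp
  moreover have "multiplicity (int p) (-1) = 0"
    by (simp add: multiplicity_unit_right)
  ultimately show ?thesis using p_gt1 by simp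
qed

lemma av_uminus: "av (-x) = av x"
  using av_mult[of "-1" x] av_minus_one by simp

lemma av_diff_sym: "av (x - y) = av (y - x)"
  using av_uminus[of "x-y"] by simp

lemma av_power: "av (x^n) = av x ^ n"
  by (induction n) (simp_all add: av_one av_mult)

lemma av_ultra_diff: "av (x-y) \<le> max (av x) (av y)"
  using av_ultra[of x "-y"] av_uminus[of y] by simp

lemma av_nat_coprime: "\<not> p dvd k \<Longrightarrow> av (of_nat k) = 1"
proof -
  assume a: "\<not> p dvd k"
  hence k0: "int k \<noteq> 0" by (cases k) auto
  have "av (of_int (int k)) = real p powr (- real (multiplicity (int p) (int k)))" by (rule av_int[OF k0])
  moreover have "multiplicity (int p) (int k) = 0"
    using a by (simp add: not_dvd_imp_multiplicity_0)
  ultimately show ?thesis using p_gt1 by simp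
qed

lemma av_nat_le1: "av (of_nat k) \<le> 1"
proof (cases "k = 0")
  case True thus ?thesis using av_zero_iff[of 0] by simp
next
  case False
  hence k0: "int k \<noteq> 0" by auto
  have "av (of_int (int k)) = real p powr (- real (multiplicity (int p) (int k)))" by (rule av_int[OF k0])
  moreover have "real p powr (- real (multiplicity (int p) (int k))) \<le> 1"
    using p_gt1 by (simp add: powr_le_one_le ge_one_powr_ge_zero powr_minus_divide)
  ultimately show ?thesis by simp
qed

lemma av_p: "av (of_nat p) = 1 / real p"
proof -
  have k0: "int p \<noteq> 0" using p_gt1 by auto
  have "av (of_int (int p)) = real p powr (- real (multiplicity (int p) (int p)))" by (rule av_int[OF k0])
  moreover have "multiplicity (int p) (int p) = 1"
    using pp by (simp add: multiplicity_self prime_nat_iff_prime)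
  ultimately show ?thesis using p_gt1 by (simp add: powr_minus_divide)
qed

lemma av_choose: "0 < i \<Longrightarrow> i < p \<Longrightarrow> av (of_nat (p choose i)) \<le> 1 / real p"
proof -
  assume i: "0 < i" "i < p"
  have "p dvd (p choose i)" using dvd_choose_prime[of i p] i pp by auto
  then obtain c where c: "p choose i = p * c" by blast
  have "av (of_nat (p choose i)) = av (of_nat p) * av (of_nat c)" by (simp add: c av_mult)
  also have "\<dots> \<le> 1 / real p * 1" using av_p av_nat_le1[of c] av_nonneg p_gt1
    by (simp add: divide_right_mono)
  finally show ?thesis by simp
qed

lemma av_two: "av 2 = 1"
proof -
  have "\<not> p dvd 2" using dvd_imp_le[of p 2] po p_gt1 by (cases "p=2") auto
  thus ?thesis using av_nat_coprime[of 2] by simp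
qed

lemma av_sum_le: "finite I \<Longrightarrow> (\<And>i. i \<in> I \<Longrightarrow> av (f i) \<le> B) \<Longrightarrow> 0 \<le> B \<Longrightarrow> av (sum f I) \<le> B"
proof (induction I rule: finite_induct)
  case empty thus ?case using av_zero_iff[of 0] by simp
next
  case (insert x F)
  have "av (sum f (insert x F)) = av (f x + sum f F)" using insert by simp
  also have "\<dots> \<le> max (av (f x)) (av (sum f F))" by (rule av_ultra)
  also have "\<dots> \<le> B" using insert by auto
  finally show ?case .
qed

lemma av_sum_less: "finite I \<Longrightarrow> (\<And>i. i \<in> I \<Longrightarrow> av (f i) < B) \<Longrightarrow> 0 < B \<Longrightarrow> av (sum f I) < B"
proof (induction I rule: finite_induct)
  case empty thus ?case using av_zero_iff[of 0] by simp
next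
  case (insert x F)
  have "av (sum f (insert x F)) = av (f x + sum f F)" using insert by simp
  also have "\<dots> \<le> max (av (f x)) (av (sum f F))" by (rule av_ultra)
  also have "\<dots> < B" using insert by auto
  finally show ?case .
qed

lemma av_strict: "av x < av y \<Longrightarrow> av (x + y) = av y"
proof -
  assume a: "av x < av y"
  have "av (x+y) \<le> max (av x) (av y)" by (rule av_ultra)
  moreover have "av y \<le> max (av (x+y)) (av x)" using av_ultra_diff[of "x+y" x] by simp
  ultimately show ?thesis using a by linarith
qed


lemma av_inverse: "av (inverse x) = inverse (av x)"
proof (cases "x = 0")
  case True thus ?thesis using av_zero_iff[of 0] by simp
next
  case False
  have h: "av x * av (inverse x) = 1" using av_mult[of x "inverse x"] False av_one by simp
  have "av x \<noteq> 0" using False av_zero_iff by simp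
  thus ?thesis using h by (simp add: inverse_eq_divide eq_divide_eq mult.commute)
qed

lemma av_divide: "av (x / y) = av x / av y"
  by (simp add: divide_inverse av_mult av_inverse)

definition "rho = real p powr (- 1 / (real p - 1))"

lemma rho_pos: "0 < rho" unfolding rho_def using p_gt1 by simp

lemma rho_lt1: "rho < 1" unfolding rho_def using p_gt1
  by (simp add: powr_less_one)

lemma rho_pow: "rho ^ (p - 1) = 1 / real p"
proof -
  have "rho ^ (p - 1) = rho powr real (p - 1)" using rho_pos by (simp add: powr_realpow)
  also have "\<dots> = real p powr (- 1 / (real p - 1) * real (p - 1))" unfolding rho_def by (simp add: powr_powr)
  also have "- 1 / (real p - 1) * real (p - 1) = -1" using p_gt1 by (simp add: of_nat_diff)
  finally show ?thesis using p_gt1 by (simp add: powr_minus_divide)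
qed

lemma small_pow: "0 \<le> t \<Longrightarrow> t < rho \<Longrightarrow> t ^ (p - 1) < 1 / real p"
  using rho_pow power_strict_mono[of t rho "p-1"] p_gt1 by auto

lemma pow_p_expand: fixes u :: 'a shows "(1+u)^p - 1 = of_nat p * u + (\<Sum>k\<in>{2..p}. of_nat (p choose k) * u^k)"
proof -
  have e: "(u+1)^p = (\<Sum>k\<le>p. of_nat (p choose k) * u^k)" using binomial_ring[of u 1 p] by simp
  have "{..p} = insert 0 (insert 1 {2..p})" using p_gt1 by auto
  hence "(\<Sum>k\<le>p. of_nat (p choose k) * u^k) = 1 + of_nat p * u + (\<Sum>k\<in>{2..p}. of_nat (p choose k) * u^k)"
    by (simp add: add.assoc)
  thus ?thesis using e by (simp add: add.commute)
qed

lemma av_pow_p: assumes "av u < rho" shows "av ((1+u)^p - 1) = av u / real p"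
proof (cases "u = 0")
  case True thus ?thesis using av_zero_iff[of 0] p_gt1 by simp
next
  case False
  hence up: "av u > 0" using av_zero_iff[of u] av_nonneg[of u] by linarith
  have u1: "av u < 1" using assms rho_lt1 by simp
  have pu: "av (of_nat p * u) = av u / real p" using av_mult av_p by simp
  have "av (\<Sum>k\<in>{2..p}. of_nat (p choose k) * u^k) < av u / real p"
  proof (rule av_sum_less)
    fix k assume k: "k \<in> {2..p}"
    show "av (of_nat (p choose k) * u^k) < av u / real p"
    proof (cases "k = p")
      case True
      obtain p' where p': "p = Suc p'" using p_gt1 by (cases p) auto
      have "av (u^p) = av u * av u ^ (p - 1)" unfolding p' by (simp add: av_power av_mult)
      also have "\<dots> < av u * (1 / real p)"
      proof -
        have "av u ^ (p-1) < 1/real p" by (rule small_pow) (use av_nonneg assms in auto)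
        thus ?thesis using mult_strict_left_mono[OF _ up] by blast
      qed
      finally show ?thesis using True by simp
    next
      case False
      hence kp: "k < p" "0 < k" using k by auto
      have "av (of_nat (p choose k) * u^k) = av (of_nat (p choose k)) * av u ^ k" by (simp add: av_mult av_power)
      also have "\<dots> \<le> 1 / real p * av u ^ k"
        by (rule mult_right_mono[OF av_choose[OF kp(2,1)]]) (simp add: av_nonneg)
      also have "av u ^ k < av u" using k up u1 by (intro power_strict_decreasing[of 1 k "av u", simplified]) auto
      hence "1 / real p * av u ^ k < av u / real p" using p_gt1 by (simp add: divide_strict_right_mono)
      finally show ?thesis .
    qed
  qed (use up p_gt1 in auto)
  hence "av (of_nat p * u + (\<Sum>k\<in>{2..p}. of_nat (p choose k) * u^k)) = av u / real p"
    using av_strict[of "\<Sum>k\<in>{2..p}. of_nat (p choose k) * u^k" "of_nat p * u"] pu by (simp add: add.commute)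
  thus ?thesis by (simp only: pow_p_expand)
qed

definition "good w \<longleftrightarrow> av (w - 1) < rho"

lemma good_pow_p: "good w \<Longrightarrow> av (w^p - 1) = av (w - 1) / real p"
  using av_pow_p[of "w - 1"] unfolding good_def by simp

lemma good_pow_pN: "good w \<Longrightarrow> av (w^(p^N) - 1) = av (w - 1) / real p ^ N"
proof (induction N)
  case 0 thus ?case by simp
next
  case (Suc N)
  have g0: "good w" using Suc by simp
  have pN: "1 \<le> real p ^ N" using p_gt1 by simp
  have "av (w - 1) / real p ^ N \<le> av (w - 1)"
    using mult_left_mono[OF pN av_nonneg[of "w-1"]] pN av_nonneg[of "w-1"] by (simp add: divide_le_eq)
  hence g: "good (w^(p^N))" using Suc g0 unfolding good_def by simp
  have "w^(p^Suc N) = (w^(p^N))^p" by (simp only: power_Suc2 power_mult)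
  hence "av (w^(p^Suc N) - 1) = av (w^(p^N) - 1) / real p" using good_pow_p[OF g] by simp
  thus ?case using Suc by simp
qed

lemma good_tends: "good w \<Longrightarrow> (\<lambda>N. av (w^(p^N) - 1)) \<longlonglongrightarrow> 0"
proof -
  assume g: "good w"
  have "(\<lambda>N. av (w - 1) * inverse (real p ^ N)) \<longlonglongrightarrow> av (w - 1) * 0"
    using LIMSEQ_inverse_realpow_zero[of "real p"] p_gt1 by (intro tendsto_mult) auto
  thus ?thesis using good_pow_pN[OF g] by (simp add: divide_inverse)
qed

end


definition has_fint :: "nat \<Rightarrow> ('a::field \<Rightarrow> real) \<Rightarrow> (nat \<Rightarrow> 'a) \<Rightarrow> 'a \<Rightarrow> bool" where
  "has_fint p av f L \<longleftrightarrow> av_tends av (\<lambda>N. \<Sum>x<p ^ N. f x * (-1) ^ x) L"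

context
  fixes p :: nat and av :: "'a::field \<Rightarrow> real"
  assumes pp: "prime p" and po: "odd p" and cp: "Cp_field p av"
begin

lemmas A = av_nonneg[OF pp po cp] av_zero_iff[OF pp po cp] av_mult[OF pp po cp] av_ultra[OF pp po cp]
  av_one[OF pp po cp] av_uminus[OF pp po cp] av_diff_sym[OF pp po cp] av_power[OF pp po cp]
  av_two[OF pp po cp] av_inverse[OF pp po cp] av_divide[OF pp po cp]

lemma av_tends_unique: "av_tends av s L \<Longrightarrow> av_tends av s M \<Longrightarrow> L = M"
proof -
  assume a: "av_tends av s L" "av_tends av s M"
  have t: "(\<lambda>n. av (s n - L) + av (s n - M)) \<longlonglongrightarrow> 0 + 0"
    using a unfolding av_tends_def by (intro tendsto_add)
  have "\<And>n. av (L - M) \<le> av (s n - L) + av (s n - M)"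
  proof -
    fix n
    have "L - M = (s n - M) - (s n - L)" by simp
    hence "av (L - M) \<le> max (av (s n - M)) (av (s n - L))"
      by (subst \<open>L - M = (s n - M) - (s n - L)\<close>) (rule av_ultra_diff[OF pp po cp])
    moreover have "max (av (s n - M)) (av (s n - L)) \<le> av (s n - L) + av (s n - M)" by (simp add: A(1))
    ultimately show "av (L - M) \<le> av (s n - L) + av (s n - M)" by (rule order_trans)
  qed
  hence "av (L - M) \<le> 0" using LIMSEQ_le_const[OF t] by auto
  thus ?thesis using A(1)[of "L-M"] A(2)[of "L-M"] by simp
qed

lemma fint_eq: "has_fint p av f L \<Longrightarrow> fint p av f = L"
  unfolding fint_def has_fint_def using av_tends_unique by blast

lemma has_fint_fint: "has_fint p av f L \<Longrightarrow> has_fint p av f (fint p av f)"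
  using fint_eq by simp

lemma av_tends_add: "av_tends av s L \<Longrightarrow> av_tends av t M \<Longrightarrow> av_tends av (\<lambda>n. s n + t n) (L + M)"
proof -
  assume a: "av_tends av s L" "av_tends av t M"
  have t: "(\<lambda>n. av (s n - L) + av (t n - M)) \<longlonglongrightarrow> 0 + 0"
    using a unfolding av_tends_def by (intro tendsto_add)
  have le: "\<And>n. av ((s n + t n) - (L + M)) \<le> av (s n - L) + av (t n - M)"
  proof -
    fix n
    have "(s n + t n) - (L + M) = (s n - L) + (t n - M)" by simp
    hence "av ((s n + t n) - (L + M)) \<le> max (av (s n - L)) (av (t n - M))"
      by (subst \<open>(s n + t n) - (L + M) = (s n - L) + (t n - M)\<close>) (rule A(4))
    moreover have "max (av (s n - L)) (av (t n - M)) \<le> av (s n - L) + av (t n - M)" by (simp add: A(1))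
    ultimately show "av ((s n + t n) - (L + M)) \<le> av (s n - L) + av (t n - M)" by (rule order_trans)
  qed
  show ?thesis unfolding av_tends_def
    by (rule tendsto_sandwich[of "\<lambda>_. 0" _ _ "\<lambda>n. av (s n - L) + av (t n - M)"])
       (use le A(1) t in auto)
qed

lemma av_tends_cmult: "av_tends av s L \<Longrightarrow> av_tends av (\<lambda>n. c * s n) (c * L)"
proof -
  assume a: "av_tends av s L"
  have "(\<lambda>n. av c * av (s n - L)) \<longlonglongrightarrow> av c * 0"
    using a unfolding av_tends_def by (intro tendsto_mult) auto
  moreover have "\<And>n. av (c * s n - c * L) = av c * av (s n - L)"
    unfolding right_diff_distrib[symmetric] by (rule A(3))
  ultimately show ?thesis unfolding av_tends_def by simp
qed

lemma has_fint_add: "has_fint p av f L \<Longrightarrow> has_fint p av g M \<Longrightarrow> has_fint p av (\<lambda>x. f x + g x) (L + M)"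
  unfolding has_fint_def using av_tends_add by (simp add: distrib_right sum.distrib)

lemma has_fint_cmult: "has_fint p av f L \<Longrightarrow> has_fint p av (\<lambda>x. c * f x) (c * L)"
proof -
  assume "has_fint p av f L"
  hence "av_tends av (\<lambda>N. c * (\<Sum>x<p ^ N. f x * (-1) ^ x)) (c * L)"
    unfolding has_fint_def by (rule av_tends_cmult)
  moreover have "(\<lambda>N. c * (\<Sum>x<p ^ N. f x * (-1) ^ x)) = (\<lambda>N. \<Sum>x<p ^ N. (c * f x) * (-1) ^ x)"
    by (simp add: sum_distrib_left mult.assoc)
  ultimately show ?thesis unfolding has_fint_def by simp
qed

lemma has_fint_zero: "has_fint p av (\<lambda>x. 0) 0"
  unfolding has_fint_def av_tends_def using A(2)[of 0] by simp

lemma has_fint_sum: "finite I \<Longrightarrow> (\<And>i. i \<in> I \<Longrightarrow> has_fint p av (f i) (L i))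
   \<Longrightarrow> has_fint p av (\<lambda>x. \<Sum>i\<in>I. f i x) (\<Sum>i\<in>I. L i)"
proof (induction I rule: finite_induct)
  case empty thus ?case using has_fint_zero by simp
next
  case (insert a F)
  thus ?case using has_fint_add[of "f a" "L a" "\<lambda>x. \<Sum>i\<in>F. f i x"] by simp
qed

lemma good_av1: "good p av w \<Longrightarrow> av (1 + w) = 1"
proof -
  assume g: "good p av w"
  have "av (w - 1) < 1" using g rho_lt1[OF pp po cp] unfolding good_def[OF pp po cp] by simp
  hence "av ((w - 1) + 2) = av 2" by (intro av_strict[OF pp po cp]) (simp add: A(9))
  moreover have "(w - 1) + 2 = 1 + w" by simp
  ultimately show ?thesis using A(9) by simp
qed

lemma good_ne: "good p av w \<Longrightarrow> 1 + w \<noteq> 0"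
proof
  assume g: "good p av w" and z: "1 + w = 0"
  have "av (1 + w) = 1" by (rule good_av1[OF g])
  thus False using z A(2)[of 0] by simp
qed

lemma has_fint_geom: assumes g: "good p av w" shows "has_fint p av (\<lambda>x. w ^ x) (2 / (1 + w))"
proof -
  have ne: "1 + w \<noteq> 0" by (rule good_ne[OF g])
  have ps: "(\<Sum>x<p^N. w ^ x * (-1) ^ x) = (1 + w^(p^N)) / (1 + w)" for N
  proof -
    have "(\<Sum>x<p^N. w ^ x * (-1) ^ x) = (\<Sum>x<p^N. (-w) ^ x)" by (intro sum.cong) (simp_all add: power_minus' mult.commute)
    also have "\<dots> = (1 - (-w)^(p^N)) / (1 - (-w))"
    proof -
      have nw: "-w \<noteq> 1"
      proof
        assume "-w = 1" hence "w = -1" by (metis minus_minus)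
        thus False using ne by simp
      qed
      show ?thesis by (subst sum_gp_strict) (simp add: nw)
    qed
    also have "(-w)^(p^N) = - (w^(p^N))" using po by (simp add: power_minus')
    finally show ?thesis by simp
  qed
  have d: "(1 + w^(p^N)) / (1 + w) - 2 / (1 + w) = (w^(p^N) - 1) / (1 + w)" for N
  proof -
    have "(1 + w^(p^N)) / (1 + w) - 2 / (1 + w) = ((1 + w^(p^N)) - 2) / (1 + w)"
      by (rule diff_divide_distrib[symmetric])
    moreover have "(1 + w^(p^N)) - 2 = w^(p^N) - (1::'a)" by simp
    ultimately show ?thesis by simp
  qed
  have e: "av ((\<Sum>x<p^N. w^x*(-1)^x) - 2/(1+w)) = av (w^(p^N) - 1)" for N
  proof -
    have "av ((\<Sum>x<p^N. w^x*(-1)^x) - 2/(1+w)) = av ((w^(p^N) - 1) / (1 + w))" unfolding ps d by (rule refl)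
    also have "\<dots> = av (w^(p^N) - 1) / av (1 + w)" by (rule A(11))
    also have "\<dots> = av (w^(p^N) - 1)" unfolding good_av1[OF g] by (rule div_by_1)
    finally show ?thesis .
  qed
  have e': "(\<lambda>N. av ((\<Sum>x<p^N. w^x*(-1)^x) - 2/(1+w))) = (\<lambda>N. av (w^(p^N) - 1))"
    by (rule ext) (rule e)
  have t: "(\<lambda>N. av ((\<Sum>x<p^N. w^x*(-1)^x) - 2/(1+w))) \<longlonglongrightarrow> 0"
    by (subst e') (rule good_tends[OF pp po cp g])
  show ?thesis unfolding has_fint_def av_tends_def by (rule t)
qed

lemma has_fint_geom_sum: "finite I \<Longrightarrow> (\<And>i. i \<in> I \<Longrightarrow> good p av (w i))
   \<Longrightarrow> has_fint p av (\<lambda>x. \<Sum>i\<in>I. c i * w i ^ x) (\<Sum>i\<in>I. c i * (2 / (1 + w i)))"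
proof (rule has_fint_sum)
  fix i assume "i \<in> I" "\<And>i. i \<in> I \<Longrightarrow> good p av (w i)"
  thus "has_fint p av (\<lambda>x. c i * w i ^ x) (c i * (2 / (1 + w i)))"
    by (intro has_fint_cmult has_fint_geom) simp
qed

end


context
  fixes p :: nat and av :: "'a::field \<Rightarrow> real"
  assumes pp: "prime p" and po: "odd p" and cp: "Cp_field p av"
begin

lemmas A' = av_nonneg[OF pp po cp] av_zero_iff[OF pp po cp] av_mult[OF pp po cp] av_ultra[OF pp po cp]
  av_one[OF pp po cp] av_uminus[OF pp po cp] av_diff_sym[OF pp po cp] av_power[OF pp po cp]
  av_two[OF pp po cp] av_inverse[OF pp po cp] av_divide[OF pp po cp]

lemma good_def': "good p av w \<longleftrightarrow> av (w - 1) < rho p" by (rule good_def[OF pp po cp])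

lemma good_av_eq1: "good p av w \<Longrightarrow> av w = 1"
proof -
  assume g: "good p av w"
  have "av (w - 1) < av 1" using g rho_lt1[OF pp po cp] A'(5) unfolding good_def' by simp
  hence "av ((w - 1) + 1) = av 1" by (rule av_strict[OF pp po cp])
  thus ?thesis using A'(5) by simp
qed

lemma good_pow_le: assumes g: "good p av w" shows "av (w^n - 1) \<le> av (w - 1)"
proof -
  have e: "w^n - 1 = (w - 1) * (\<Sum>i<n. w^i)" by (rule power_diff_1_eq)
  have "av (\<Sum>i<n. w^i) \<le> 1"
    by (rule av_sum_le[OF pp po cp]) (simp_all add: A'(8) good_av_eq1[OF g])
  hence "av (w - 1) * av (\<Sum>i<n. w^i) \<le> av (w - 1) * 1" by (intro mult_left_mono) (simp_all add: A'(1))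
  thus ?thesis unfolding e A'(3) by simp
qed

lemma good_inverse_eq: assumes g: "good p av w" shows "av (inverse w - 1) = av (w - 1)"
proof -
  have w0: "w \<noteq> 0" using good_av_eq1[OF g] A'(2)[of 0] by (intro notI) simp
  have "inverse w - 1 = (1 - w) / w" using w0 by (simp add: field_simps)
  hence "av (inverse w - 1) = av (1 - w) / av w" using A'(11) by simp
  thus ?thesis using good_av_eq1[OF g] A'(7)[of 1 w] by simp
qed

lemma good_powi_le: assumes g: "good p av w" shows "av (w powi a - 1) \<le> av (w - 1)"
proof (cases "a \<ge> 0")
  case True
  hence "w powi a = w ^ nat a" by (simp add: power_int_def)
  thus ?thesis using good_pow_le[OF g] by simp
next
  case False
  hence e: "w powi a = inverse (w ^ nat (-a))" by (simp add: power_int_def power_inverse)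
  have g2: "good p av (w ^ nat (-a))" using good_pow_le[OF g, of "nat (-a)"] g unfolding good_def' by simp
  show ?thesis unfolding e good_inverse_eq[OF g2] by (rule good_pow_le[OF g])
qed

lemma good_powi: "good p av w \<Longrightarrow> good p av (w powi a)"
  using good_powi_le unfolding good_def' by (meson le_less_trans)

lemma good_pow: "good p av w \<Longrightarrow> good p av (w ^ n)"
  using good_powi[of w "int n"] by simp

lemma good_root: "good p av w \<Longrightarrow> w \<noteq> 1 \<Longrightarrow> 0 < k \<Longrightarrow> w ^ k \<noteq> 1"
proof (induction k arbitrary: w rule: less_induct)
  case (less k)
  show ?case
  proof (cases "p dvd k")
    case False
    show ?thesis
    proof
      assume wk: "w ^ k = 1"
      have "(w - 1) * (\<Sum>i<k. w^i) = 0" using power_diff_1_eq[of w k] wk by simp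
      hence s0: "(\<Sum>i<k. w^i) = 0" using less.prems(2) by simp
      have split: "(\<Sum>i<k. w^i) = (\<Sum>i<k. w^i - 1) + of_nat k" by (simp add: sum_subtractf)
      have "av (\<Sum>i<k. w^i - 1) < 1"
      proof (rule av_sum_less[OF pp po cp])
        fix i assume "i \<in> {..<k}"
        have "av (w^i - 1) \<le> av (w - 1)" by (rule good_pow_le[OF less.prems(1)])
        also have "\<dots> < 1" using less.prems(1) rho_lt1[OF pp po cp] unfolding good_def' by simp
        finally show "av (w^i - 1) < 1" .
      qed simp_all
      hence "av ((\<Sum>i<k. w^i - 1) + of_nat k) = av (of_nat k)"
        using av_nat_coprime[OF pp po cp False] by (intro av_strict[OF pp po cp]) simp
      hence "av (\<Sum>i<k. w^i) = 1" using split av_nat_coprime[OF pp po cp False] by simp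
      thus False using s0 A'(2)[of 0] by simp
    qed
  next
    case True
    then obtain k' where k': "k = p * k'" by blast
    have k'0: "0 < k'" using k' less.prems(3) by (cases k') auto
    have k'k: "k' < k" using k' k'0 p_gt1[OF pp po cp] by simp
    have gv: "good p av (w ^ p)" by (rule good_pow[OF less.prems(1)])
    have "av (w ^ p - 1) = av (w - 1) / real p" by (rule good_pow_p[OF pp po cp less.prems(1)])
    moreover have "av (w - 1) > 0" using less.prems(2) A'(1)[of "w-1"] A'(2)[of "w-1"] by simp
    ultimately have "av (w ^ p - 1) > 0" using p_gt1[OF pp po cp] by simp
    hence v1: "w ^ p \<noteq> 1" using A'(2)[of 0] by auto
    have "(w ^ p) ^ k' \<noteq> 1" by (rule less.IH[OF k'k gv v1 k'0])
    thus ?thesis unfolding k' power_mult .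
  qed
qed

lemma qint_nz: "good p av q \<Longrightarrow> q \<noteq> 1 \<Longrightarrow> 0 < k \<Longrightarrow> qint q k \<noteq> 0"
  unfolding qint_def using good_root by simp

lemma qfact_nz: "good p av q \<Longrightarrow> q \<noteq> 1 \<Longrightarrow> qfact q m \<noteq> 0"
  unfolding qfact_def using qint_nz by (simp add: prod_zero_iff)

end


definition Mq :: "'a::field \<Rightarrow> nat \<Rightarrow> nat \<Rightarrow> 'a" where
  "Mq q r m = (\<Prod>i<m. q^i * qint q (r - i))"

lemma coeff_mult_lin: fixes P :: "'a::comm_ring_1 poly"
  shows "coeff (P * [:1, b:]) k = coeff P k + (if k = 0 then 0 else b * coeff P (k - 1))"
proof -
  have "P * [:1, b:] = [:1, b:] * P" by (simp add: mult.commute)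
  also have "\<dots> = P + pCons 0 (smult b P)" by simp
  finally show ?thesis by (simp add: coeff_pCons')
qed

lemma stir_Suc: "(\<Prod>i\<in>{1..Suc N}. [:1, a i:]) = (\<Prod>i\<in>{1..N}. [:1, a i:]) * [:1, a (Suc N):]"
  by (simp add: prod.cl_ivl_Suc)

lemma stir_zero: fixes a :: "nat \<Rightarrow> 'a::comm_ring_1"
  shows "N < k \<Longrightarrow> coeff (\<Prod>i\<in>{1..N}. [:1, a i:]) k = 0"
proof (induction N arbitrary: k)
  case 0 thus ?case by simp
next
  case (Suc N)
  show ?case unfolding stir_Suc coeff_mult_lin using Suc by auto
qed

lemma stir_first: fixes a :: "nat \<Rightarrow> 'a::comm_ring_1"
  shows "(\<Sum>k\<le>Suc N. coeff (\<Prod>i\<in>{1..N}. [:1, a i:]) k * (-1)^k * x^(Suc N - k))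
       = x * (\<Sum>k\<le>N. coeff (\<Prod>i\<in>{1..N}. [:1, a i:]) k * (-1)^k * x^(N - k))"
proof -
  have "(\<Sum>k\<le>Suc N. coeff (\<Prod>i\<in>{1..N}. [:1, a i:]) k * (-1)^k * x^(Suc N - k))
     = (\<Sum>k\<le>N. coeff (\<Prod>i\<in>{1..N}. [:1, a i:]) k * (-1)^k * x^(Suc N - k))"
    using stir_zero[of N "Suc N" a] by simp
  also have "\<dots> = (\<Sum>k\<le>N. x * (coeff (\<Prod>i\<in>{1..N}. [:1, a i:]) k * (-1)^k * x^(N - k)))"
    by (intro sum.cong) (auto simp: Suc_diff_le)
  finally show ?thesis by (simp add: sum_distrib_left)
qed

lemma stir_sum: fixes a :: "nat \<Rightarrow> 'a::comm_ring_1"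
  shows "(\<Sum>k\<le>N. coeff (\<Prod>i\<in>{1..N}. [:1, a i:]) k * (-1)^k * x^(N - k)) = (\<Prod>i\<in>{1..N}. (x - a i))"
proof (induction N)
  case 0 thus ?case by simp
next
  case (Suc N)
  define c where "c k = coeff (\<Prod>i\<in>{1..N}. [:1, a i:]) k" for k
  define S where "S = (\<Sum>k\<le>N. c k * (-1)^k * x^(N - k))"
  have rec: "coeff (\<Prod>i\<in>{1..Suc N}. [:1, a i:]) k = c k + (if k = 0 then 0 else a (Suc N) * c (k - 1))" for k
    unfolding stir_Suc coeff_mult_lin c_def ..
  have "(\<Sum>k\<le>Suc N. coeff (\<Prod>i\<in>{1..Suc N}. [:1, a i:]) k * (-1)^k * x^(Suc N - k))
     = (\<Sum>k\<le>Suc N. c k * (-1)^k * x^(Suc N - k))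
       + (\<Sum>k\<le>Suc N. (if k = 0 then 0 else a (Suc N) * c (k - 1)) * (-1)^k * x^(Suc N - k))"
    unfolding rec by (simp add: distrib_right sum.distrib)
  also have "(\<Sum>k\<le>Suc N. c k * (-1)^k * x^(Suc N - k)) = x * S"
    unfolding c_def S_def by (rule stir_first)
  also have "(\<Sum>k\<le>Suc N. (if k = 0 then 0 else a (Suc N) * c (k - 1)) * (-1)^k * x^(Suc N - k))
      = (\<Sum>k\<le>N. a (Suc N) * c k * (-1)^(Suc k) * x^(N - k))"
    by (subst sum.atMost_Suc_shift) simp
  also have "\<dots> = - (a (Suc N) * S)"
    unfolding S_def by (simp add: sum_distrib_left sum_negf[symmetric] mult.assoc)
  finally have "(\<Sum>k\<le>Suc N. coeff (\<Prod>i\<in>{1..Suc N}. [:1, a i:]) k * (-1)^k * x^(Suc N - k))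
      = (x - a (Suc N)) * S" by (simp add: algebra_simps)
  moreover have "S = (\<Prod>i\<in>{1..N}. (x - a i))" using Suc unfolding S_def c_def .
  ultimately show ?case by (simp add: prod.cl_ivl_Suc mult.commute)
qed

lemma qint_diff: "i \<le> r \<Longrightarrow> qint q r - qint q i = q^i * qint q (r - i)"
proof -
  assume i: "i \<le> r"
  then obtain d where d: "r = i + d" using le_Suc_ex by blast
  have "qint q r - qint q i = ((1 - q^r) - (1 - q^i)) / (1 - q)" unfolding qint_def by (rule diff_divide_distrib[symmetric])
  also have "(1 - q^r) - (1 - q^i) = q^i * (1 - q^d)" unfolding d by (simp add: power_add algebra_simps)
  finally show ?thesis unfolding qint_def d by simp
qed

lemma T_eq: fixes q :: "'a::field"
  assumes "m \<le> r"
  shows "(\<Sum>k=0..m. qS1 q (int m - 1) k * (-1)^k * qint q r ^ (m - k)) = Mq q r m"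
proof (cases m)
  case 0 thus ?thesis by (simp add: qS1_def Mq_def)
next
  case (Suc N)
  have nN: "nat (int (Suc N) - 1) = N" by simp
  have "(\<Sum>k=0..m. qS1 q (int m - 1) k * (-1)^k * qint q r ^ (m - k))
      = (\<Sum>k\<le>Suc N. coeff (\<Prod>i\<in>{1..N}. [:1, qint q i:]) k * (-1)^k * qint q r ^ (Suc N - k))"
    unfolding qS1_def Suc atLeast0AtMost nN ..
  also have "\<dots> = qint q r * (\<Prod>i\<in>{1..N}. (qint q r - qint q i))"
    unfolding stir_first stir_sum ..
  also have "(\<Prod>i\<in>{1..N}. (qint q r - qint q i)) = (\<Prod>i\<in>{1..N}. q^i * qint q (r - i))"
    using assms Suc by (intro prod.cong) (auto intro: qint_diff)
  also have "\<dots> = (\<Prod>i<N. q^(Suc i) * qint q (r - Suc i))"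
    using prod.atLeast1_atMost_eq[of "\<lambda>i. q^i * qint q (r - i)" N] by simp
  also have "qint q r * \<dots> = Mq q r m"
    unfolding Mq_def Suc prod.lessThan_Suc_shift by simp
  finally show ?thesis .
qed

lemma Mq_Suc_Suc: "Mq q (Suc r) (Suc j) = qint q (Suc r) * q^j * Mq q r j"
proof -
  have "Mq q (Suc r) (Suc j) = qint q (Suc r) * (\<Prod>i<j. q * (q^i * qint q (r - i)))"
    unfolding Mq_def prod.lessThan_Suc_shift by (simp add: mult.assoc)
  also have "(\<Prod>i<j. q * (q^i * qint q (r - i))) = q^j * Mq q r j"
    unfolding Mq_def by (simp add: prod.distrib)
  finally show ?thesis by (simp add: mult.assoc)
qed

lemma Mq_zero: "r < j \<Longrightarrow> Mq q r j = 0"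
  unfolding Mq_def by (rule prod_zero) (auto intro!: bexI[of _ r] simp: qint_def)

lemma qint_id: "qint q (Suc (j + d)) * q^j = q^j * qint q d + q^(j + d) * qint q (Suc j)"
proof -
  have num: "(1 - q^(Suc (j+d))) * q^j = q^j*(1 - q^d) + q^(j+d)*(1 - q^(Suc j))"
    by (simp add: algebra_simps power_add)
  have "qint q (Suc (j + d)) * q^j = ((1 - q^(Suc (j+d))) * q^j) / (1 - q)" by (simp add: qint_def)
  also have "\<dots> = (q^j*(1 - q^d) + q^(j+d)*(1 - q^(Suc j))) / (1 - q)" unfolding num ..
  also have "\<dots> = q^j * qint q d + q^(j + d) * qint q (Suc j)" by (simp add: qint_def add_divide_distrib)
  finally show ?thesis .
qed

lemma Mq_rec: "Mq q (Suc r) (Suc j) = Mq q r (Suc j) + q^r * qint q (Suc j) * Mq q r j"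
proof (cases "j \<le> r")
  case True
  then obtain d where d: "r = j + d" using le_Suc_ex by blast
  have "Mq q r (Suc j) = Mq q r j * (q^j * qint q d)" unfolding Mq_def d by simp
  thus ?thesis unfolding Mq_Suc_Suc using qint_id[of q j d] d
    by (simp add: algebra_simps)
next
  case False
  thus ?thesis unfolding Mq_Suc_Suc using Mq_zero[of r j q] Mq_zero[of r "Suc j" q] by simp
qed

lemma QB: "coeff (\<Prod>i<r. [:1, q^i:]) m * qfact q m = Mq q r m"
proof (induction r arbitrary: m)
  case 0
  show ?case
  proof (cases m)
    case 0 thus ?thesis by (simp add: Mq_def qfact_def)
  next
    case (Suc j) thus ?thesis using Mq_zero[of 0 m q] by simp
  qed
next
  case (Suc r)
  have e: "(\<Prod>i<Suc r. [:1, q^i:]) = (\<Prod>i<r. [:1, q^i:]) * [:1, q^r:]" by simp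
  show ?case
  proof (cases m)
    case 0 thus ?thesis using Suc.IH[of 0] unfolding e coeff_mult_lin by (simp add: Mq_def qfact_def)
  next
    case (Suc j)
    have qf: "qfact q (Suc j) = qfact q j * qint q (Suc j)" unfolding qfact_def by (simp add: prod.cl_ivl_Suc)
    have "coeff (\<Prod>i<Suc r. [:1, q^i:]) m * qfact q m
        = coeff (\<Prod>i<r. [:1, q^i:]) (Suc j) * qfact q (Suc j) + q^r * qint q (Suc j) * (coeff (\<Prod>i<r. [:1, q^i:]) j * qfact q j)"
      unfolding e coeff_mult_lin Suc qf by (simp add: algebra_simps)
    also have "\<dots> = Mq q (Suc r) (Suc j)" unfolding Suc.IH Mq_rec ..
    finally show ?thesis using Suc by simp
  qed
qed


lemma QB_poly: fixes q :: "'a::field"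
  assumes nz: "\<And>m. m \<le> r \<Longrightarrow> qfact q m \<noteq> 0"
  shows "(\<Prod>i<r. (1 + q^i * s)) = (\<Sum>m\<le>r. (Mq q r m / qfact q m) * s^m)"
proof -
  define Q where "Q = (\<Prod>i<r. [:1, q^i:])"
  have "degree Q \<le> sum (degree \<circ> (\<lambda>i. [:1, q^i:])) {..<r}" unfolding Q_def by (rule degree_prod_sum_le) simp
  also have "\<dots> \<le> (\<Sum>i<r. 1)" by (rule sum_mono) simp
  finally have deg: "degree Q \<le> r" by simp
  have "poly Q s = (\<Prod>i<r. (1 + q^i * s))" unfolding Q_def by (simp add: poly_prod mult.commute)
  moreover have "poly Q s = (\<Sum>m\<le>r. coeff Q m * s^m)"
  proof -
    have "poly Q s = poly (\<Sum>i\<le>r. monom (coeff Q i) i) s" using poly_as_sum_of_monoms'[OF deg] by simp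
    thus ?thesis by (simp add: poly_sum poly_monom)
  qed
  moreover have "coeff Q m = Mq q r m / qfact q m" if "m \<le> r" for m
    using QB[where q=q and r=r and m=m] nz[OF that] unfolding Q_def by (simp add: eq_divide_eq)
  ultimately show ?thesis by simp
qed

lemma prod_rev: fixes r :: nat shows "(\<Prod>j\<in>{1..r}. f j) = (\<Prod>i<r. f (r - i))"
proof (induction r)
  case 0 thus ?case by simp
next
  case (Suc r)
  have "(\<Prod>i<Suc r. f (Suc r - i)) = f (Suc r) * (\<Prod>i<r. f (r - i))"
    unfolding prod.lessThan_Suc_shift by simp
  thus ?case using Suc by (simp add: prod.cl_ivl_Suc mult.commute)
qed

lemma key: fixes q :: "'a::field"
  assumes q0: "q \<noteq> 0" and nz: "\<And>m. m \<le> r \<Longrightarrow> qfact q m \<noteq> 0"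
  shows "(\<Prod>j\<in>{1..r}. (1 + t * q powi (h - int j)))
       = (\<Sum>m=0..r. q powi ((h - int r) * int m) * (Mq q r m / qfact q m) * t^m)"
proof -
  define s where "s = t * q powi (h - int r)"
  have "(\<Prod>j\<in>{1..r}. (1 + t * q powi (h - int j))) = (\<Prod>i<r. (1 + t * q powi (h - int (r - i))))"
    by (rule prod_rev)
  also have "\<dots> = (\<Prod>i<r. (1 + q^i * s))"
  proof (rule prod.cong)
    fix i assume "i \<in> {..<r}"
    hence "h - int (r - i) = (h - int r) + int i" by auto
    hence "q powi (h - int (r - i)) = q powi ((h - int r) + int i)" by (simp only:)
    also have "\<dots> = q powi (h - int r) * q powi (int i)" by (rule power_int_add) (simp add: q0)
    finally have "q powi (h - int (r - i)) = q powi (h - int r) * q ^ i" by simp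
    thus "1 + t * q powi (h - int (r - i)) = 1 + q^i * s" unfolding s_def by (simp add: ac_simps)
  qed simp
  also have "\<dots> = (\<Sum>m\<le>r. (Mq q r m / qfact q m) * s^m)" by (rule QB_poly[OF nz])
  also have "\<dots> = (\<Sum>m=0..r. q powi ((h - int r) * int m) * (Mq q r m / qfact q m) * t^m)"
    unfolding atLeast0AtMost s_def
    by (intro sum.cong) (simp_all add: power_mult_distrib power_int_power' ac_simps)
  finally show ?thesis .
qed

lemma binom1: fixes a :: "'a::comm_ring_1" shows "(a + 1)^n = (\<Sum>k\<le>n. of_nat (n choose k) * a^k)"
  using binomial_ring[of a 1 n] by (simp only: power_one mult_1_right)

lemma pow_split: fixes q :: "'a::comm_ring_1" shows "(q^(m+y))^l = q^(m*l) * (q^l)^y"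
proof -
  have "(q^(m+y))^l = q^((m+y)*l)" by (rule power_mult[symmetric])
  also have "(m+y)*l = m*l + l*y" by (simp add: algebra_simps)
  finally show ?thesis by (simp only: power_add power_mult)
qed

lemma pow_term: fixes q :: "'a::comm_ring_1"
  shows "c * (- (q^(m+y)))^l = c * (-1)^l * q^(m*l) * (q^l)^y"
  by (simp only: power_minus[of "q^(m+y)" l] pow_split mult.assoc)

lemma qint_pow_expand: fixes q :: "'a::field"
  shows "qint q (m + y) ^ n = (\<Sum>l\<le>n. (1 / (1-q)^n * of_nat (n choose l) * (-1)^l * q^(m*l)) * (q^l)^y)"
proof -
  have "(1 - q^(m+y))^n = (- (q^(m+y)) + 1)^n" by simp
  also have "\<dots> = (\<Sum>l\<le>n. of_nat (n choose l) * (- (q^(m+y)))^l)" by (rule binom1)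
  also have "\<dots> = (\<Sum>l\<le>n. of_nat (n choose l) * (-1)^l * q^(m*l) * (q^l)^y)"
    by (simp only: pow_term)
  finally have e: "(1 - q^(m+y))^n = (\<Sum>l\<le>n. of_nat (n choose l) * (-1)^l * q^(m*l) * (q^l)^y)" .
  have "qint q (m + y) ^ n = 1 / (1-q)^n * (1 - q^(m+y))^n" unfolding qint_def by (simp add: power_divide)
  also have "\<dots> = (\<Sum>l\<le>n. (1 / (1-q)^n * of_nat (n choose l) * (-1)^l * q^(m*l)) * (q^l)^y)"
    unfolding e sum_distrib_left by (simp only: mult.assoc)
  finally show ?thesis .
qed

lemma E_expand: fixes q :: "'a::field"
  assumes q1: "q \<noteq> 1"
  shows "qint q (m + y) ^ n = 1 / (1 - q) ^ n * (\<Sum>j=0..n. \<Sum>l=0..j.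
                     of_nat (n choose j) * of_nat (j choose l) * (-1) ^ (j + l)
                     * (1 - q) ^ l * q ^ (m * j) * qint q y ^ l)"
proof -
  have a: "(1 - q) ^ l * qint q y ^ l = (1 - q^y)^l" for l
    using q1 unfolding qint_def by (simp add: power_divide)
  have qc: "(q^y)^j = (q^j)^y" for j by (simp only: power_mult[symmetric] mult.commute)
  have inner: "(\<Sum>l=0..j. of_nat (n choose j) * of_nat (j choose l) * (-1) ^ (j + l)
                     * (1 - q) ^ l * q ^ (m * j) * qint q y ^ l)
             = of_nat (n choose j) * (- (q^(m+y)))^j" for j
  proof -
    have s1: "(\<Sum>l=0..j. of_nat (n choose j) * of_nat (j choose l) * (-1) ^ (j + l)
                     * (1 - q) ^ l * q ^ (m * j) * qint q y ^ l)
        = of_nat (n choose j) * (-1)^j * q^(m*j) * (\<Sum>l\<le>j. of_nat (j choose l) * (- (1 - q^y))^l)"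
      unfolding atLeast0AtMost sum_distrib_left
    proof (rule sum.cong)
      fix l
      show "of_nat (n choose j) * of_nat (j choose l) * (-1) ^ (j + l) * (1 - q) ^ l * q ^ (m * j) * qint q y ^ l
          = of_nat (n choose j) * (-1)^j * q^(m*j) * (of_nat (j choose l) * (- (1 - q^y))^l)"
        unfolding power_minus[of "1 - q^y"] power_add a[symmetric] by (simp only: ac_simps)
    qed simp
    have s2: "(\<Sum>l\<le>j. of_nat (j choose l) * (- (1 - q^y))^l) = (- (1 - q^y) + 1)^j"
      by (rule binom1[symmetric])
    have s3: "- (1 - q^y) + 1 = q^y" by simp
    show ?thesis unfolding s1 s2 s3 qc pow_term by (simp only: mult.assoc)
  qed
  have "(\<Sum>j=0..n. of_nat (n choose j) * (- (q^(m+y)))^j) = (- (q^(m+y)) + 1)^n"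
    unfolding atLeast0AtMost by (rule binom1[symmetric])
  hence "(\<Sum>j=0..n. \<Sum>l=0..j. of_nat (n choose j) * of_nat (j choose l) * (-1) ^ (j + l)
                     * (1 - q) ^ l * q ^ (m * j) * qint q y ^ l) = (1 - q^(m+y))^n"
    unfolding inner by simp
  thus ?thesis unfolding qint_def by (simp add: power_divide)
qed


lemma power_int_sum: fixes q :: "'a::field"
  assumes q0: "q \<noteq> 0" shows "finite A \<Longrightarrow> q powi (\<Sum>j\<in>A. f j) = (\<Prod>j\<in>A. q powi f j)"
proof (induction A rule: finite_induct)
  case empty thus ?case by simp
next
  case (insert a F)
  have "q powi (\<Sum>j\<in>insert a F. f j) = q powi (f a + (\<Sum>j\<in>F. f j))" using insert by simp
  also have "\<dots> = q powi f a * q powi (\<Sum>j\<in>F. f j)" by (rule power_int_add) (simp add: q0)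
  also have "\<dots> = (\<Prod>j\<in>insert a F. q powi f j)" using insert by simp
  finally show ?case .
qed

context
  fixes p :: nat and av :: "'a::field \<Rightarrow> real"
  assumes pp: "prime p" and po: "odd p" and cp: "Cp_field p av"
begin

lemma mfint_prod:
  assumes gw: "\<And>j. good p av (w j)"
  shows "(\<And>xs xs'. (\<And>j. k < j \<Longrightarrow> xs j = xs' j) \<Longrightarrow> G xs = G xs') \<Longrightarrow>
     mfint p av k (\<lambda>xs. G xs * (\<Prod>j\<in>{1..k}. w j ^ xs j)) = G (\<lambda>_. 0) * (\<Prod>j\<in>{1..k}. 2 / (1 + w j))"
proof (induction k arbitrary: G)
  case 0 show ?case by simp
next
  case (Suc k)
  define C where "C = (\<Prod>j\<in>{1..k}. 2 / (1 + w j))"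
  have inner: "mfint p av k (\<lambda>xs. G (xs(Suc k := y)) * (\<Prod>j\<in>{1..Suc k}. w j ^ (xs(Suc k := y)) j))
        = (G (\<lambda>_. 0) * C) * w (Suc k) ^ y" for y
  proof -
    have e: "(\<lambda>xs. G (xs(Suc k := y)) * (\<Prod>j\<in>{1..Suc k}. w j ^ (xs(Suc k := y)) j))
       = (\<lambda>xs. (G (xs(Suc k := y)) * w (Suc k) ^ y) * (\<Prod>j\<in>{1..k}. w j ^ xs j))"
    proof
      fix xs
      have "(\<Prod>j\<in>{1..k}. w j ^ (xs(Suc k := y)) j) = (\<Prod>j\<in>{1..k}. w j ^ xs j)"
        by (intro prod.cong) auto
      thus "G (xs(Suc k := y)) * (\<Prod>j\<in>{1..Suc k}. w j ^ (xs(Suc k := y)) j)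
          = (G (xs(Suc k := y)) * w (Suc k) ^ y) * (\<Prod>j\<in>{1..k}. w j ^ xs j)"
        by (simp add: prod.cl_ivl_Suc ac_simps)
    qed
    have dep: "(G (xs(Suc k := y)) * w (Suc k) ^ y) = (G (xs'(Suc k := y)) * w (Suc k) ^ y)"
      if "\<And>j. k < j \<Longrightarrow> xs j = xs' j" for xs xs'
    proof -
      have "G (xs(Suc k := y)) = G (xs'(Suc k := y))" by (rule Suc.prems) (use that in auto)
      thus ?thesis by simp
    qed
    have "mfint p av k (\<lambda>xs. (G (xs(Suc k := y)) * w (Suc k) ^ y) * (\<Prod>j\<in>{1..k}. w j ^ xs j))
        = (G ((\<lambda>_. 0)(Suc k := y)) * w (Suc k) ^ y) * C"
      unfolding C_def by (rule Suc.IH[of "\<lambda>xs. G (xs(Suc k := y)) * w (Suc k) ^ y", OF dep]) auto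
    moreover have "G ((\<lambda>_. 0)(Suc k := y)) = G (\<lambda>_. 0)" by (rule Suc.prems) auto
    ultimately show ?thesis unfolding e by (simp add: ac_simps)
  qed
  have "mfint p av (Suc k) (\<lambda>xs. G xs * (\<Prod>j\<in>{1..Suc k}. w j ^ xs j))
      = fint p av (\<lambda>y. (G (\<lambda>_. 0) * C) * w (Suc k) ^ y)"
    by (simp only: mfint.simps inner)
  also have "\<dots> = (G (\<lambda>_. 0) * C) * (2 / (1 + w (Suc k)))"
    by (rule fint_eq[OF pp po cp], rule has_fint_cmult[OF pp po cp], rule has_fint_geom[OF pp po cp gw])
  also have "\<dots> = G (\<lambda>_. 0) * (\<Prod>j\<in>{1..Suc k}. 2 / (1 + w j))"
    unfolding C_def by (simp add: prod.cl_ivl_Suc ac_simps)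
  finally show ?case .
qed

end


context
  fixes p :: nat and av :: "'a::field \<Rightarrow> real"
  assumes pp: "prime p" and po: "odd p" and cp: "Cp_field p av"
begin

lemma NH_denom:
  assumes gq: "good p av q"
  shows "mfint p av r (\<lambda>xs. q ^ (l * (\<Sum>j=1..r. xs j)) * q powi (\<Sum>j=1..r. (h - int j) * int (xs j)))
       = (\<Prod>j\<in>{1..r}. 2 / (1 + q powi (int l + h - int j)))"
proof -
  have q0: "q \<noteq> 0" using good_av_eq1[OF pp po cp gq] av_zero_iff[OF pp po cp, of 0] by (intro notI) simp
  define w where "w j = q powi (int l + h - int j)" for j
  have gw: "good p av (w j)" for j unfolding w_def by (rule good_powi[OF pp po cp gq])
  have f: "(\<lambda>xs. q ^ (l * (\<Sum>j=1..r. xs j)) * q powi (\<Sum>j=1..r. (h - int j) * int (xs j)))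
     = (\<lambda>xs. (\<lambda>_. 1::'a) xs * (\<Prod>j\<in>{1..r}. w j ^ xs j))"
  proof
    fix xs :: "nat \<Rightarrow> nat"
    have a: "q ^ (l * (\<Sum>j=1..r. xs j)) = (\<Prod>j\<in>{1..r}. (q^l) ^ xs j)"
      by (simp only: power_mult power_sum)
    have b: "q powi (\<Sum>j=1..r. (h - int j) * int (xs j)) = (\<Prod>j\<in>{1..r}. (q powi (h - int j)) ^ xs j)"
    proof -
      have "q powi (\<Sum>j=1..r. (h - int j) * int (xs j)) = (\<Prod>j\<in>{1..r}. q powi ((h - int j) * int (xs j)))"
        by (rule power_int_sum[OF q0]) simp
      also have "\<dots> = (\<Prod>j\<in>{1..r}. (q powi (h - int j)) ^ xs j)"
        by (intro prod.cong) (simp_all add: power_int_mult)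
      finally show ?thesis .
    qed
    have c: "q^l * q powi (h - int j) = w j" for j
    proof -
      have "q^l * q powi (h - int j) = q powi (int l) * q powi (h - int j)" by simp
      also have "\<dots> = q powi (int l + (h - int j))" by (rule power_int_add[symmetric]) (simp add: q0)
      finally show ?thesis unfolding w_def by (simp add: add_diff_eq)
    qed
    show "q ^ (l * (\<Sum>j=1..r. xs j)) * q powi (\<Sum>j=1..r. (h - int j) * int (xs j))
        = (\<lambda>_. 1::'a) xs * (\<Prod>j\<in>{1..r}. w j ^ xs j)"
      unfolding a b prod.distrib[symmetric] power_mult_distrib[symmetric] c by simp
  qed
  show ?thesis unfolding f
    by (subst mfint_prod[OF pp po cp gw]) (simp_all add: w_def)
qed

lemma NH_eq:
  assumes gq: "good p av q"
  shows "qEuler_NH p av q n h r x = (\<Sum>l\<in>{0..n}. (1 / (1 - q) ^ n * of_nat (n choose l) * (-1) ^ l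
           * ((\<Prod>j\<in>{1..r}. (1 + q powi (int l + h - int j))) / 2 ^ r)) * (q ^ l) ^ x)"
proof -
  have d: "(\<Prod>j\<in>{1..r}. 2 / (1 + q powi (int l + h - int j))) = 2 ^ r / (\<Prod>j\<in>{1..r}. (1 + q powi (int l + h - int j)))" for l
    by (simp add: prod_dividef)
  show ?thesis unfolding qEuler_NH_def NH_denom[OF gq] d unfolding sum_distrib_left
    by (intro sum.cong) (simp_all add: power_mult divide_inverse ac_simps)
qed

lemma NH_int:
  assumes gq: "good p av q"
  shows "fint p av (qEuler_NH p av q n h r) = (\<Sum>l\<in>{0..n}. (1 / (1 - q) ^ n * of_nat (n choose l) * (-1) ^ l
           * ((\<Prod>j\<in>{1..r}. (1 + q powi (int l + h - int j))) / 2 ^ r)) * (2 / (1 + q ^ l)))"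
proof -
  have "qEuler_NH p av q n h r = (\<lambda>x. \<Sum>l\<in>{0..n}. (1 / (1 - q) ^ n * of_nat (n choose l) * (-1) ^ l
           * ((\<Prod>j\<in>{1..r}. (1 + q powi (int l + h - int j))) / 2 ^ r)) * (q ^ l) ^ x)"
    using NH_eq[OF gq] by (intro ext) simp
  thus ?thesis
    by (simp only:) (rule fint_eq[OF pp po cp], rule has_fint_geom_sum[OF pp po cp],
        simp_all add: good_pow[OF pp po cp gq])
qed

lemma poly_int:
  assumes gq: "good p av q"
  shows "has_fint p av (\<lambda>y. qint q (m + y) ^ n)
     (\<Sum>l\<le>n. (1 / (1-q)^n * of_nat (n choose l) * (-1)^l * q^(m*l)) * (2 / (1 + q^l)))"
proof -
  have "(\<lambda>y. qint q (m + y) ^ n) = (\<lambda>y. \<Sum>l\<le>n. (1 / (1-q)^n * of_nat (n choose l) * (-1)^l * q^(m*l)) * (q^l)^y)"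
    by (intro ext) (rule qint_pow_expand)
  thus ?thesis
    by (simp only:) (rule has_fint_geom_sum[OF pp po cp], simp_all add: good_pow[OF pp po cp gq])
qed

lemma poly_eq:
  assumes gq: "good p av q"
  shows "qEuler_poly p av q n m = (\<Sum>l\<le>n. (1 / (1-q)^n * of_nat (n choose l) * (-1)^l * (2 / (1 + q^l))) * (q^l)^m)"
proof -
  have "qEuler_poly p av q n m = (\<Sum>l\<le>n. (1 / (1-q)^n * of_nat (n choose l) * (-1)^l * q^(m*l)) * (2 / (1 + q^l)))"
    unfolding qEuler_poly_def by (rule fint_eq[OF pp po cp poly_int[OF gq]])
  also have "\<dots> = (\<Sum>l\<le>n. (1 / (1-q)^n * of_nat (n choose l) * (-1)^l * (2 / (1 + q^l))) * (q^l)^m)"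
    by (intro sum.cong) (simp_all add: power_mult[symmetric] mult.commute mult.left_commute)
  finally show ?thesis .
qed

lemma poly_eq2:
  assumes gq: "good p av q" and q1: "q \<noteq> 1"
  shows "qEuler_poly p av q n m = 1 / (1 - q) ^ n * (\<Sum>j=0..n. \<Sum>l=0..j.
                     of_nat (n choose j) * of_nat (j choose l) * (-1) ^ (j + l)
                     * (1 - q) ^ l * q ^ (m * j) * qEuler p av q l)"
proof -
  have hl: "has_fint p av (\<lambda>y. qint q y ^ l) (qEuler p av q l)" for l
  proof -
    have "has_fint p av (\<lambda>y. qint q (0 + y) ^ l)
       (\<Sum>i\<le>l. (1 / (1-q)^l * of_nat (l choose i) * (-1)^i * q^(0*i)) * (2 / (1 + q^i)))"
      by (rule poly_int[OF gq])
    hence "has_fint p av (\<lambda>y. qint q y ^ l) (fint p av (\<lambda>y. qint q y ^ l))"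
      by (intro has_fint_fint[OF pp po cp]) simp
    thus ?thesis unfolding qEuler_def .
  qed
  have "has_fint p av (\<lambda>y. 1 / (1 - q) ^ n * (\<Sum>j=0..n. \<Sum>l=0..j.
                     of_nat (n choose j) * of_nat (j choose l) * (-1) ^ (j + l)
                     * (1 - q) ^ l * q ^ (m * j) * qint q y ^ l))
     (1 / (1 - q) ^ n * (\<Sum>j=0..n. \<Sum>l=0..j.
                     of_nat (n choose j) * of_nat (j choose l) * (-1) ^ (j + l)
                     * (1 - q) ^ l * q ^ (m * j) * qEuler p av q l))"
    by (intro has_fint_cmult[OF pp po cp] has_fint_sum[OF pp po cp] finite_atLeastAtMost hl)
  moreover have "(\<lambda>y. 1 / (1 - q) ^ n * (\<Sum>j=0..n. \<Sum>l=0..j.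
                     of_nat (n choose j) * of_nat (j choose l) * (-1) ^ (j + l)
                     * (1 - q) ^ l * q ^ (m * j) * qint q y ^ l)) = (\<lambda>y. qint q (m + y) ^ n)"
    by (intro ext) (rule E_expand[OF q1, symmetric])
  ultimately show ?thesis unfolding qEuler_poly_def by (intro fint_eq[OF pp po cp]) simp
qed

end


theorem mainTheorem12:
  fixes p :: nat and av :: "'a::field \<Rightarrow> real" and q :: 'a
    and h :: int and n :: nat and r :: nat
  assumes "prime p" and "odd p"
    and "Cp_field p av"
    and "q \<noteq> 1"
    and "av (1 - q) < real p powr (- 1 / (real p - 1))"
  shows "fint p av (qEuler_NH p av q n h r)
           = 1 / 2 ^ r * (\<Sum>m=0..r. 1 / qfact q m *
               (\<Sum>k=0..m. q powi ((h - int r) * int m) * qS1 q (int m - 1) k * (-1) ^ k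
                  * qint q r ^ (m - k) * qEuler_poly p av q n m))
       \<and> 1 / 2 ^ r * (\<Sum>m=0..r. 1 / qfact q m *
               (\<Sum>k=0..m. q powi ((h - int r) * int m) * qS1 q (int m - 1) k * (-1) ^ k
                  * qint q r ^ (m - k) * qEuler_poly p av q n m))
           = 1 / 2 ^ r * (\<Sum>m=0..r. 1 / qfact q m *
               (\<Sum>k=0..m. q powi ((h - int r) * int m) * qS1 q (int m - 1) k * (-1) ^ k
                  * qint q r ^ (m - k) *
                  (1 / (1 - q) ^ n * (\<Sum>j=0..n. \<Sum>l=0..j.
                     of_nat (n choose j) * of_nat (j choose l) * (-1) ^ (j + l)
                     * (1 - q) ^ l * q ^ (m * j) * qEuler p av q l))))"
proof -
  note pp = assms(1) and po = assms(2) and cp = assms(3) and q1 = assms(4)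
  have gq: "good p av q" unfolding good_def[OF pp po cp] rho_def[OF pp po cp]
    using assms(5) av_diff_sym[OF pp po cp, of 1 q] by simp
  have q0: "q \<noteq> 0" using good_av_eq1[OF pp po cp gq] av_zero_iff[OF pp po cp, of 0] by (intro notI) simp
  have nz: "qfact q m \<noteq> 0" for m by (rule qfact_nz[OF pp po cp gq q1])
  define E where "E m = qEuler_poly p av q n m" for m
  define c where "c m = q powi ((h - int r) * int m) * (Mq q r m / qfact q m)" for m
  define g where "g l = 1 / (1-q)^n * of_nat (n choose l) * (-1)^l * (2 / (1 + q^l))" for l
  define P where "P l = (\<Prod>j\<in>{1..r}. (1 + q powi (int l + h - int j)))" for l
  have inner: "1 / qfact q m *
               (\<Sum>k=0..m. q powi ((h - int r) * int m) * qS1 q (int m - 1) k * (-1) ^ k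
                  * qint q r ^ (m - k) * E m) = c m * E m" if "m \<in> {0..r}" for m
  proof -
    have "(\<Sum>k=0..m. q powi ((h - int r) * int m) * qS1 q (int m - 1) k * (-1) ^ k
                  * qint q r ^ (m - k) * E m)
        = (q powi ((h - int r) * int m) * E m) * (\<Sum>k=0..m. qS1 q (int m - 1) k * (-1) ^ k * qint q r ^ (m - k))"
      unfolding sum_distrib_left by (intro sum.cong) (simp_all only: ac_simps)
    also have "(\<Sum>k=0..m. qS1 q (int m - 1) k * (-1) ^ k * qint q r ^ (m - k)) = Mq q r m"
      by (rule T_eq) (use that in simp)
    finally show ?thesis unfolding c_def by (simp add: divide_inverse ac_simps)
  qed
  have Eexp: "E m = (\<Sum>l\<le>n. g l * (q^l)^m)" for m
    unfolding E_def g_def by (rule poly_eq[OF pp po cp gq])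
  have keyl: "(\<Sum>m=0..r. c m * (q^l)^m) = P l" for l
  proof -
    have "P l = (\<Prod>j\<in>{1..r}. (1 + q^l * q powi (h - int j)))"
    proof -
      have "q^l * q powi (h - int j) = q powi (int l + h - int j)" for j
      proof -
        have "q^l * q powi (h - int j) = q powi (int l) * q powi (h - int j)" by simp
        also have "\<dots> = q powi (int l + (h - int j))" by (rule power_int_add[symmetric]) (simp add: q0)
        finally show ?thesis by (simp add: add_diff_eq)
      qed
      thus ?thesis unfolding P_def by simp
    qed
    also have "\<dots> = (\<Sum>m=0..r. q powi ((h - int r) * int m) * (Mq q r m / qfact q m) * (q^l)^m)"
      by (rule key[OF q0 nz])
    finally show ?thesis unfolding c_def by simp
  qed
  have part1: "fint p av (qEuler_NH p av q n h r)
           = 1 / 2 ^ r * (\<Sum>m=0..r. 1 / qfact q m *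
               (\<Sum>k=0..m. q powi ((h - int r) * int m) * qS1 q (int m - 1) k * (-1) ^ k
                  * qint q r ^ (m - k) * qEuler_poly p av q n m))"
  proof -
    have "(\<Sum>m=0..r. 1 / qfact q m *
               (\<Sum>k=0..m. q powi ((h - int r) * int m) * qS1 q (int m - 1) k * (-1) ^ k
                  * qint q r ^ (m - k) * qEuler_poly p av q n m))
        = (\<Sum>m=0..r. c m * E m)"
      using inner unfolding E_def by (intro sum.cong) simp_all
    also have "\<dots> = (\<Sum>m=0..r. \<Sum>l\<le>n. g l * (c m * (q^l)^m))"
      unfolding Eexp sum_distrib_left by (intro sum.cong) (simp_all only: ac_simps)
    also have "\<dots> = (\<Sum>l\<le>n. \<Sum>m=0..r. g l * (c m * (q^l)^m))" by (rule sum.swap)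
    also have "\<dots> = (\<Sum>l\<le>n. g l * P l)"
      unfolding keyl[symmetric] sum_distrib_left ..
    finally have r: "(\<Sum>m=0..r. 1 / qfact q m *
               (\<Sum>k=0..m. q powi ((h - int r) * int m) * qS1 q (int m - 1) k * (-1) ^ k
                  * qint q r ^ (m - k) * qEuler_poly p av q n m)) = (\<Sum>l\<le>n. g l * P l)" .
    show ?thesis unfolding NH_int[OF pp po cp gq] r unfolding atLeast0AtMost sum_distrib_left g_def P_def
      by (intro sum.cong) (simp_all add: divide_inverse ac_simps)
  qed
  have E2: "qEuler_poly p av q n m = 1 / (1 - q) ^ n * (\<Sum>j=0..n. \<Sum>l=0..j.
                     of_nat (n choose j) * of_nat (j choose l) * (-1) ^ (j + l)
                     * (1 - q) ^ l * q ^ (m * j) * qEuler p av q l)" for m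
    by (rule poly_eq2[OF pp po cp gq q1])
  show ?thesis using part1 by (simp only: E2)
qed


end
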